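(* Let $C$ be a set of pairwise disjoint lines on the Fermat cubic ${\rm F}_3$ and put $C^s=C\cap\mathcal{L}^s$ for $s=0,1,2$. If $\#C^s=3$ for some $s$, then there exists $k\in\{0,1,2\}\setminus\{s\}$ such that $C^k=\emptyset$.
   Context: ${\rm F}_3\subset\mathbb{P}^3(\mathbb{C})$ is the surface $x^3-y^3-z^3+w^3=0$. Let $\eta$ be a primitive cube root of unity and $v=-1$. For $k,i\in\{0,1,2\}$ define $L^0_{k,i}:\{y=\eta^i x,\ w=\eta^k z\}$, $L^1_{k,i}:\{x=\eta^{k+i}z,\ y=\eta^i w\}$, $L^2_{k,i}:\{x=v\eta^i w,\ y=v\eta^{k+i}z\}$, and $\mathcal{L}^s=\{L^s_{k,i}\}_{k,i}$; the 27 lines on ${\rm F}_3$ are exactly $\mathcal{L}^0\cup\mathcal{L}^1\cup\mathcal{L}^2$. *)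

theory Defs
  imports Complex_Main
begin

text \<open>Points of P^3(C) are represented by their homogeneous coordinate vectors
  (x,y,z,w) in C^4 - {0}; a line of P^3 is represented by its affine cone minus the origin,
  i.e. the set of nonzero coordinate vectors of its points.\<close>

type_synonym pt = "complex \<times> complex \<times> complex \<times> complex"

definition eta :: complex where
  "eta = cis (2 * pi / 3)"

definition fermat_cubic :: "pt set" where
  "fermat_cubic = {(x,y,z,w). (x,y,z,w) \<noteq> (0,0,0,0) \<and> x^3 - y^3 - z^3 + w^3 = 0}"

definition Lline :: "nat \<Rightarrow> nat \<Rightarrow> nat \<Rightarrow> pt set" where
  "Lline s k i = {(x,y,z,w). (x,y,z,w) \<noteq> (0,0,0,0) \<and>
     (if s = 0 then y = eta^i * x \<and> w = eta^k * z
      else if s = 1 then x = eta^(k+i) * z \<and> y = eta^i * w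
      else x = - (eta^i * w) \<and> y = - (eta^(k+i) * z))}"

definition Lfam :: "nat \<Rightarrow> pt set set" where
  "Lfam s = {Lline s k i | k i. k < 3 \<and> i < 3}"

definition lines_F3 :: "pt set set" where
  "lines_F3 = Lfam 0 \<union> Lfam 1 \<union> Lfam 2"

end

theory Submission
  imports Defs
begin

lemma eta3: "eta ^ 3 = 1"
  unfolding eta_def by (simp add: DeMoivre)

lemma eta_mod: "eta ^ n = eta ^ (n mod 3)"
proof -
  have "eta ^ n = eta ^ (3 * (n div 3) + n mod 3)" by (metis div_mult_mod_eq mult.commute)
  also have "\<dots> = (eta ^ 3) ^ (n div 3) * eta ^ (n mod 3)" by (simp only: power_add power_mult)
  also have "\<dots> = eta ^ (n mod 3)" by (simp only: eta3 power_one mult_1_left)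
  finally show ?thesis .
qed

lemma eta_eq: "a mod 3 = b mod 3 \<Longrightarrow> eta ^ a = eta ^ b"
  by (metis eta_mod)

lemma eta_mul: "eta ^ a * eta ^ b = eta ^ (a + b)"
  by (simp add: power_add)

definition M :: "nat \<Rightarrow> nat \<Rightarrow> nat \<Rightarrow> nat \<Rightarrow> nat \<Rightarrow> nat \<Rightarrow> bool" where
  "M s k i t k' i' = (if s = 0 \<and> t = 0 then k = k' \<or> i = i'
     else if s = 0 \<and> t = 1 then (i + k') mod 3 = k mod 3
     else if s = 1 \<and> t = 0 then (i' + k) mod 3 = k' mod 3
     else if s = 0 \<and> t = 2 then (i + k) mod 3 = k' mod 3
     else if s = 2 \<and> t = 0 then (i' + k') mod 3 = k mod 3
     else if s = t then (k + i) mod 3 = (k' + i') mod 3 \<or> i = i'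
     else if s = 1 \<and> t = 2 then (k + 2 * i + i') mod 3 = k' mod 3
     else (k' + 2 * i' + i) mod 3 = k mod 3)"

lemma l00:
  assumes "k = k' \<or> i = i'" shows "Lline 0 k i \<inter> Lline 0 k' i' \<noteq> {}"
  using assms
proof
  assume "k = k'"
  then have "(0, 0, 1, eta ^ k) \<in> Lline 0 k i \<inter> Lline 0 k' i'" by (simp add: Lline_def)
  then show ?thesis by blast
next
  assume "i = i'"
  then have "(1, eta ^ i, 0, 0) \<in> Lline 0 k i \<inter> Lline 0 k' i'" by (simp add: Lline_def)
  then show ?thesis by blast
qed

lemma l11:
  assumes "(k + i) mod 3 = (k' + i') mod 3 \<or> i = i'" shows "Lline 1 k i \<inter> Lline 1 k' i' \<noteq> {}"
  using assms
proof
  assume h: "(k + i) mod 3 = (k' + i') mod 3"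
  then have "eta ^ (k + i) = eta ^ (k' + i')" by (rule eta_eq)
  then have "(eta ^ (k + i), 0, 1, 0) \<in> Lline 1 k i \<inter> Lline 1 k' i'" by (simp add: Lline_def)
  then show ?thesis by blast
next
  assume "i = i'"
  then have "(0, eta ^ i, 0, 1) \<in> Lline 1 k i \<inter> Lline 1 k' i'" by (simp add: Lline_def)
  then show ?thesis by blast
qed

lemma l22:
  assumes "(k + i) mod 3 = (k' + i') mod 3 \<or> i = i'" shows "Lline 2 k i \<inter> Lline 2 k' i' \<noteq> {}"
  using assms
proof
  assume h: "(k + i) mod 3 = (k' + i') mod 3"
  then have "eta ^ (k + i) = eta ^ (k' + i')" by (rule eta_eq)
  then have "(0, - (eta ^ (k + i)), 1, 0) \<in> Lline 2 k i \<inter> Lline 2 k' i'" by (simp add: Lline_def)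
  then show ?thesis by blast
next
  assume "i = i'"
  then have "(- (eta ^ i), 0, 0, 1) \<in> Lline 2 k i \<inter> Lline 2 k' i'" by (simp add: Lline_def)
  then show ?thesis by blast
qed

lemma l01:
  assumes "(i + k') mod 3 = k mod 3" shows "Lline 0 k i \<inter> Lline 1 k' i' \<noteq> {}"
proof -
  have "((i + k') + i') mod 3 = (k + i') mod 3" by (rule mod_add_cong[OF assms refl])
  then have e: "eta ^ (i + k' + i') = eta ^ (i' + k)" by (intro eta_eq) (simp add: ac_simps)
  have "(eta ^ (k' + i'), eta ^ (i + k' + i'), 1, eta ^ k) \<in> Lline 0 k i \<inter> Lline 1 k' i'"
    using e by (simp add: Lline_def eta_mul add.assoc)
  then show ?thesis by blast
qed

lemma l02:
  assumes "(i + k) mod 3 = k' mod 3" shows "Lline 0 k i \<inter> Lline 2 k' i' \<noteq> {}"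
proof -
  have "((i + k) + i') mod 3 = (k' + i') mod 3" by (rule mod_add_cong[OF assms refl])
  then have e: "eta ^ (i + (i' + k)) = eta ^ (k' + i')" by (intro eta_eq) (simp add: ac_simps)
  have "(- (eta ^ (i' + k)), - (eta ^ (k' + i')), 1, eta ^ k) \<in> Lline 0 k i \<inter> Lline 2 k' i'"
    using e by (simp add: Lline_def eta_mul)
  then show ?thesis by blast
qed

lemma l12:
  assumes "(k + 2 * i + i') mod 3 = k' mod 3" shows "Lline 1 k i \<inter> Lline 2 k' i' \<noteq> {}"
proof -
  define w where "w = - (eta ^ (k + i + 2 * i'))"
  have "((k + i) + 3 * i') mod 3 = (k + i) mod 3" by simp
  then have e1: "eta ^ (i' + (k + i + 2 * i')) = eta ^ (k + i)" by (intro eta_eq) (simp add: ac_simps)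
  have "((k + 2 * i + i') + i') mod 3 = (k' + i') mod 3" by (rule mod_add_cong[OF assms refl])
  then have e2: "eta ^ (i + (k + i + 2 * i')) = eta ^ (k' + i')" by (intro eta_eq) (simp add: ac_simps)
  have "(eta ^ (k + i), eta ^ i * w, 1, w) \<in> Lline 1 k i \<inter> Lline 2 k' i'"
    using e1 e2 by (simp add: Lline_def w_def eta_mul)
  then show ?thesis by blast
qed

lemma meetI:
  assumes "s < 3" "t < 3" "M s k i t k' i'"
  shows "Lline s k i \<inter> Lline t k' i' \<noteq> {}"
proof -
  have s: "s = 0 \<or> s = 1 \<or> s = 2" and t: "t = 0 \<or> t = 1 \<or> t = 2" using assms by auto
  show ?thesis
  proof (cases "s = 0")
    case s0: True
    show ?thesis
    proof (cases "t = 0")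
      case True then show ?thesis using s0 assms(3) l00 by (simp add: M_def)
    next
      case False then have "t = 1 \<or> t = 2" using t by simp
      then show ?thesis using s0 assms(3) l01 l02 by (auto simp: M_def)
    qed
  next
    case sn0: False
    show ?thesis
    proof (cases "s = 1")
      case s1: True
      show ?thesis
      proof (cases "t = 0")
        case True then show ?thesis using s1 assms(3) l01[where k=k' and i=i' and k'=k and i'=i] by (simp add: M_def Int_commute add.commute)
      next
        case False then have "t = 1 \<or> t = 2" using t by simp
        then show ?thesis using s1 assms(3) l11 l12 by (auto simp: M_def)
      qed
    next
      case False then have s2: "s = 2" using s sn0 by simp
      show ?thesis
      proof (cases "t = 0")
        case True then show ?thesis using s2 assms(3) l02[where k=k' and i=i' and k'=k and i'=i] by (simp add: M_def Int_commute add.commute)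
      next
        case False then have "t = 1 \<or> t = 2" using t by simp
        then show ?thesis
        proof
          assume "t = 1" then show ?thesis using s2 assms(3) l12[where k=k' and i=i' and k'=k and i'=i] by (simp add: M_def Int_commute)
        next
          assume "t = 2" then show ?thesis using s2 assms(3) l22 by (simp add: M_def)
        qed
      qed
    qed
  qed
qed


lemma fam01: "Lline 0 k i \<noteq> Lline 1 k' i'" (is "_ \<noteq> Lline ?t _ _")
proof
  assume h: "Lline 0 k i = Lline 1 k' i'"
  have "(1, eta ^ i, 0, 0) \<in> Lline 0 k i" by (simp add: Lline_def)
  then have "(1, eta ^ i, 0, 0) \<in> Lline ?t k' i'" using h by simp
  then show False by (simp add: Lline_def)
qed

lemma fam02: "Lline 0 k i \<noteq> Lline 2 k' i'" (is "_ \<noteq> Lline ?t _ _")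
proof
  assume h: "Lline 0 k i = Lline 2 k' i'"
  have "(1, eta ^ i, 0, 0) \<in> Lline 0 k i" by (simp add: Lline_def)
  then have "(1, eta ^ i, 0, 0) \<in> Lline ?t k' i'" using h by simp
  then show False by (simp add: Lline_def)
qed

lemma eta_nz: "eta ^ n \<noteq> 0"
proof -
  have "eta \<noteq> 0" unfolding eta_def by (metis cis_neq_zero)
  then show ?thesis by simp
qed

lemma fam12: "Lline 1 k i \<noteq> Lline 2 k' i'"
proof
  assume h: "Lline 1 k i = Lline 2 k' i'"
  have "(eta ^ (k + i), 0, 1, 0) \<in> Lline 1 k i" by (simp add: Lline_def)
  then have "(eta ^ (k + i), 0, 1, 0) \<in> Lline 2 k' i'" using h by simp
  then show False using eta_nz[of "k + i"] by (simp add: Lline_def)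
qed

lemma fam_ne:
  assumes "s < 3" "t < 3" "s \<noteq> t" shows "Lline s k i \<noteq> Lline t k' i'"
proof -
  have "s = 0 \<or> s = 1 \<or> s = 2" "t = 0 \<or> t = 1 \<or> t = 2" using assms by auto
  then show ?thesis using assms(3) fam01 fam02 fam12 by metis
qed

definition good :: "nat \<Rightarrow> bool" where
  "good s = (\<forall>k1\<in>set [0,1,2]. \<forall>i1\<in>set [0,1,2]. \<forall>k2\<in>set [0,1,2]. \<forall>i2\<in>set [0,1,2].
     (k1, i1) \<noteq> (k2, i2) \<and> \<not> M s k1 i1 s k2 i2 \<longrightarrow>
     (\<forall>k3\<in>set [0,1,2]. \<forall>i3\<in>set [0,1,2].
       (k1, i1) \<noteq> (k3, i3) \<and> (k2, i2) \<noteq> (k3, i3) \<and> \<not> M s k1 i1 s k3 i3 \<and> \<not> M s k2 i2 s k3 i3 \<longrightarrow>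
       (\<forall>ka\<in>set [0,1,2]. \<forall>ia\<in>set [0,1,2]. M s k1 i1 ((s+1) mod 3) ka ia \<or> M s k2 i2 ((s+1) mod 3) ka ia \<or> M s k3 i3 ((s+1) mod 3) ka ia) \<or>
       (\<forall>ka\<in>set [0,1,2]. \<forall>ia\<in>set [0,1,2]. M s k1 i1 ((s+2) mod 3) ka ia \<or> M s k2 i2 ((s+2) mod 3) ka ia \<or> M s k3 i3 ((s+2) mod 3) ka ia)))"

lemma good0: "good 0" unfolding good_def by code_simp
lemma good1: "good 1" unfolding good_def by code_simp
lemma good2: "good 2" unfolding good_def by code_simp


lemma set3: "((x::nat) \<in> set [0,1,2]) = (x < 3)" by auto

lemma ball3: "(\<forall>x\<in>set [0,1,2::nat]. P x) = (\<forall>x<3. P x)"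
  unfolding Ball_def set3 by (rule refl)

lemma good_s: "s < 3 \<Longrightarrow> good s"
  using good0 good1 good2 by (metis less_Suc_eq numeral_3_eq_3 numeral_2_eq_2 One_nat_def less_one)

lemma in_fam: "l \<in> Lfam s \<Longrightarrow> \<exists>k i. k < 3 \<and> i < 3 \<and> l = Lline s k i"
  unfolding Lfam_def by blast

theorem proposition3p1:
  fixes C :: "pt set set" and s :: nat
  assumes "C \<subseteq> lines_F3"
    and "\<forall>l1\<in>C. \<forall>l2\<in>C. l1 \<noteq> l2 \<longrightarrow> l1 \<inter> l2 = {}"
    and "s < 3"
    and "card (C \<inter> Lfam s) = 3"
  shows "\<exists>k<3. k \<noteq> s \<and> C \<inter> Lfam k = {}"
proof (rule ccontr)
  assume contra: "\<not> ?thesis"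
  note disj = assms(2)
  obtain l1 l2 l3 where L: "C \<inter> Lfam s = {l1, l2, l3}" "l1 \<noteq> l2" "l2 \<noteq> l3" "l1 \<noteq> l3"
    using assms(4) card_3_iff by metis
  have l1: "l1 \<in> C" "l1 \<in> Lfam s" and l2: "l2 \<in> C" "l2 \<in> Lfam s" and l3: "l3 \<in> C" "l3 \<in> Lfam s"
    using L(1) by blast+
  obtain k1 i1 where p1: "k1 < 3" "i1 < 3" "l1 = Lline s k1 i1" using in_fam[OF l1(2)] by blast
  obtain k2 i2 where p2: "k2 < 3" "i2 < 3" "l2 = Lline s k2 i2" using in_fam[OF l2(2)] by blast
  obtain k3 i3 where p3: "k3 < 3" "i3 < 3" "l3 = Lline s k3 i3" using in_fam[OF l3(2)] by blast
  define a where "a = (s + 1) mod 3"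
  define b where "b = (s + 2) mod 3"
  have s012: "s = 0 \<or> s = 1 \<or> s = 2" using assms(3) by auto
  have a3a: "a < 3" unfolding a_def by simp
  have a3b: "a \<noteq> s" unfolding a_def using s012 by (elim disjE) simp_all
  have b3a: "b < 3" unfolding b_def by simp
  have b3b: "b \<noteq> s" unfolding b_def using s012 by (elim disjE) simp_all
  note a3 = a3a a3b and b3 = b3a b3b
  obtain la where la: "la \<in> C" "la \<in> Lfam a" using contra a3 by blast
  obtain lb where lb: "lb \<in> C" "lb \<in> Lfam b" using contra b3 by blast
  obtain ka ia where pa: "ka < 3" "ia < 3" "la = Lline a ka ia" using in_fam[OF la(2)] by blast
  obtain kb ib where pb: "kb < 3" "ib < 3" "lb = Lline b kb ib" using in_fam[OF lb(2)] by blast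
  have nm: "\<not> M s' k i t k' i'" if "s' < 3" "t < 3" "Lline s' k i \<in> C" "Lline t k' i' \<in> C"
    "Lline s' k i \<noteq> Lline t k' i'" for s' k i t k' i'
    using meetI[OF that(1,2)] disj that(3-5) by blast
  have c1: "Lline s k1 i1 \<in> C" using l1 p1 by simp
  have c2: "Lline s k2 i2 \<in> C" using l2 p2 by simp
  have c3: "Lline s k3 i3 \<in> C" using l3 p3 by simp
  have ca: "Lline a ka ia \<in> C" using la pa by simp
  have cb: "Lline b kb ib \<in> C" using lb pb by simp
  have d12: "(k1, i1) \<noteq> (k2, i2)" "(k1, i1) \<noteq> (k3, i3)" "(k2, i2) \<noteq> (k3, i3)"
    using L(2-4) p1(3) p2(3) p3(3) by auto
  have n1: "\<not> M s k1 i1 s k2 i2"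
    by (rule nm[OF assms(3) assms(3) c1 c2]) (use L(2) p1(3) p2(3) in simp)
  have n2: "\<not> M s k1 i1 s k3 i3"
    by (rule nm[OF assms(3) assms(3) c1 c3]) (use L(4) p1(3) p3(3) in simp)
  have n3: "\<not> M s k2 i2 s k3 i3"
    by (rule nm[OF assms(3) assms(3) c2 c3]) (use L(3) p2(3) p3(3) in simp)
  have sa: "s \<noteq> a" and sb: "s \<noteq> b" using a3(2) b3(2) by auto
  have fa: "\<not> M s kj ij a ka ia" if "Lline s kj ij \<in> C" for kj ij
    by (rule nm[OF assms(3) a3(1) that ca]) (rule fam_ne[OF assms(3) a3(1) sa])
  have fb: "\<not> M s kj ij b kb ib" if "Lline s kj ij \<in> C" for kj ij
    by (rule nm[OF assms(3) b3(1) that cb]) (rule fam_ne[OF assms(3) b3(1) sb])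
  have g: "good s" using good_s assms(3) .
  have G: "\<forall>k1<3. \<forall>i1<3. \<forall>k2<3. \<forall>i2<3.
     (k1, i1) \<noteq> (k2, i2) \<and> \<not> M s k1 i1 s k2 i2 \<longrightarrow>
     (\<forall>k3<3. \<forall>i3<3.
       (k1, i1) \<noteq> (k3, i3) \<and> (k2, i2) \<noteq> (k3, i3) \<and> \<not> M s k1 i1 s k3 i3 \<and> \<not> M s k2 i2 s k3 i3 \<longrightarrow>
       (\<forall>ka<3. \<forall>ia<3. M s k1 i1 a ka ia \<or> M s k2 i2 a ka ia \<or> M s k3 i3 a ka ia) \<or>
       (\<forall>ka<3. \<forall>ia<3. M s k1 i1 b ka ia \<or> M s k2 i2 b ka ia \<or> M s k3 i3 b ka ia))"
    using g unfolding good_def ball3 a_def[symmetric] b_def[symmetric] .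
  have H: "(\<forall>ka<3. \<forall>ia<3. M s k1 i1 a ka ia \<or> M s k2 i2 a ka ia \<or> M s k3 i3 a ka ia) \<or>
        (\<forall>ka<3. \<forall>ia<3. M s k1 i1 b ka ia \<or> M s k2 i2 b ka ia \<or> M s k3 i3 b ka ia)"
    using G[rule_format, OF p1(1,2) p2(1,2) conjI[OF d12(1) n1] p3(1,2)] d12(2,3) n2 n3 by simp
  then show False
  proof
    assume "\<forall>ka<3. \<forall>ia<3. M s k1 i1 a ka ia \<or> M s k2 i2 a ka ia \<or> M s k3 i3 a ka ia"
    then have "M s k1 i1 a ka ia \<or> M s k2 i2 a ka ia \<or> M s k3 i3 a ka ia" using pa(1,2) by simp
    then show False using fa[OF c1] fa[OF c2] fa[OF c3] by blast
  next
    assume "\<forall>ka<3. \<forall>ia<3. M s k1 i1 b ka ia \<or> M s k2 i2 b ka ia \<or> M s k3 i3 b ka ia"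
    then have "M s k1 i1 b kb ib \<or> M s k2 i2 b kb ib \<or> M s k3 i3 b kb ib" using pb(1,2) by simp
    then show False using fb[OF c1] fb[OF c2] fb[OF c3] by blast
  qed
qed

end
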